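(* Let $\sigma>0$, $n\ge2$, $f,g\in L^1(\mathbb{R}^2)\cap L^2(\mathbb{R}^2)$, and $\bar G=\{(1+\frac{2k}{n-1},1+\frac{2l}{n-1}):(k,l)\in\mathbb{Z}^2\}$. Then $$\Big|\Big(\frac{n-1}2\Big)^2\langle\Phi\ast f,\Phi\ast g\rangle_{L^2(\mathbb{R}^2)}-\langle\Phi\ast f,\Phi\ast g\rangle_{\ell^2(\bar G)}\Big|\le\frac{\|f\|_{L^1}\|g\|_{L^1}}{(2\pi\sigma^2)^2}\Big(1+\frac{(n-1)\sigma}{\sqrt2}\Big),$$ where $\Phi(s,t)=\varphi_{\sigma^2}(s)\varphi_{\sigma^2}(t)$.
   Context: $\varphi_{\sigma^2}(t)=(2\pi\sigma^2)^{-1/2}e^{-t^2/(2\sigma^2)}$; $\ast$ is convolution on $\mathbb{R}^2$; $\langle a,b\rangle_{\ell^2(\bar G)}=\sum_{\mathbf{x}\in\bar G}a(\mathbf{x})b(\mathbf{x})$. *)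

theory Defs
  imports "HOL-Analysis.Analysis"
begin

definition gauss :: "real \<Rightarrow> real \<Rightarrow> real" where
  "gauss v t = (2 * pi * v) powr (-1/2) * exp (- (t^2) / (2 * v))"

definition Phi2 :: "real \<Rightarrow> real \<times> real \<Rightarrow> real" where
  "Phi2 \<sigma> p = gauss (\<sigma>^2) (fst p) * gauss (\<sigma>^2) (snd p)"

definition conv2 :: "(real \<times> real \<Rightarrow> real) \<Rightarrow> (real \<times> real \<Rightarrow> real) \<Rightarrow> real \<times> real \<Rightarrow> real" where
  "conv2 h f x = (\<integral>y. h (x - y) * f y \<partial>lborel)"

definition L2 :: "(real \<times> real \<Rightarrow> real) \<Rightarrow> bool" where
  "L2 f \<longleftrightarrow> f \<in> borel_measurable lborel \<and> integrable lborel (\<lambda>x. (f x)^2)"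

definition L1norm :: "(real \<times> real \<Rightarrow> real) \<Rightarrow> real" where
  "L1norm f = (\<integral>x. \<bar>f x\<bar> \<partial>lborel)"

definition L2inner :: "(real \<times> real \<Rightarrow> real) \<Rightarrow> (real \<times> real \<Rightarrow> real) \<Rightarrow> real" where
  "L2inner a b = (\<integral>x. a x * b x \<partial>lborel)"

definition gridpt :: "nat \<Rightarrow> int \<times> int \<Rightarrow> real \<times> real" where
  "gridpt n kl = (1 + 2 * real_of_int (fst kl) / (real n - 1), 1 + 2 * real_of_int (snd kl) / (real n - 1))"

end

theory Submission
  imports Defs "HOL-Probability.Probability"
begin

definition ww :: "real \<Rightarrow> real \<Rightarrow> real" where "ww r x = exp (-(x^2)/r^2)"
definition ww1 :: "real \<Rightarrow> real \<Rightarrow> real" where "ww1 r x = -(2*x/r^2) * ww r x"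
definition ww2 :: "real \<Rightarrow> real \<Rightarrow> real" where "ww2 r x = (4*x^2/r^4 - 2/r^2) * ww r x"
definition xs :: "real \<Rightarrow> real" where "xs r = r / sqrt 2"
definition MM :: "real \<Rightarrow> real" where "MM r = sqrt 2 / r * exp (-1/2)"
definition VV :: "real \<Rightarrow> real \<Rightarrow> real" where
  "VV r x = (if x \<le> - xs r then ww1 r x else if x \<le> xs r then 2 * MM r - ww1 r x else 4 * MM r + ww1 r x)"

lemma ww_pos: "ww r x > 0" by (simp add: ww_def)

lemma ww_deriv: "r \<noteq> 0 \<Longrightarrow> (ww r has_real_derivative ww1 r x) (at x)"
  unfolding ww_def ww1_def
  by (auto intro!: derivative_eq_intros simp: field_simps power2_eq_square)

lemma ww1_deriv: assumes "r \<noteq> 0" shows "(ww1 r has_real_derivative ww2 r x) (at x)"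
proof -
  have e: "(\<lambda>x. -(2*x/r^2)) = (\<lambda>x. (-(2/r^2)) * x)" by auto
  have d: "((\<lambda>x. -(2*x/r^2)) has_real_derivative -(2/r^2)) (at x)"
    unfolding e by (auto intro!: derivative_eq_intros)
  have "((\<lambda>x. -(2*x/r^2) * ww r x) has_real_derivative (-(2/r^2)) * ww r x + ww1 r x * (-(2*x/r^2))) (at x)"
    by (rule DERIV_mult[OF d ww_deriv[OF assms]])
  moreover have "(-(2/r^2)) * ww r x + ww1 r x * (-(2*x/r^2)) = ww2 r x"
    proof -
    have "r^4 = r^2 * r^2" by (simp add: eval_nat_numeral)
    then show ?thesis using assms by (simp add: ww1_def ww2_def field_simps power2_eq_square)
  qed
  ultimately show ?thesis unfolding ww1_def[abs_def] by simp
qed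

lemma cont_ww: "continuous_on S (ww r)" unfolding ww_def divide_inverse by (intro continuous_intros)
lemma cont_ww1: "continuous_on S (ww1 r)" unfolding ww1_def ww_def divide_inverse by (intro continuous_intros)
lemma cont_ww2: "continuous_on S (ww2 r)" unfolding ww2_def ww_def divide_inverse by (intro continuous_intros)

lemma ww_xs: "r > 0 \<Longrightarrow> ww r (xs r) = exp (-1/2)" "r > 0 \<Longrightarrow> ww r (- xs r) = exp (-1/2)"
  by (simp_all add: ww_def xs_def power_divide)

lemma ww1_xs: assumes "r > 0" shows "ww1 r (- xs r) = MM r" "ww1 r (xs r) = - MM r"
proof -
  have h: "2 * (r / sqrt 2) / r^2 = sqrt 2 / r" using assms
    by (simp add: field_simps power2_eq_square)
  have a: "ww1 r (- xs r) = (2 * (r / sqrt 2) / r^2) * exp (-1/2)"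
    using ww_xs[OF assms] by (simp add: ww1_def xs_def)
  have b: "ww1 r (xs r) = - (2 * (r / sqrt 2) / r^2) * exp (-1/2)"
    using ww_xs[OF assms] by (simp add: ww1_def xs_def)
  show "ww1 r (- xs r) = MM r" "ww1 r (xs r) = - MM r"
    by (simp only: a h MM_def, simp only: b h MM_def minus_mult_left)
qed

lemma xs_sq: "r > 0 \<Longrightarrow> (xs r)^2 = r^2/2" by (simp add: xs_def power_divide)

lemma ww2_nonneg: assumes "r > 0" "x^2 \<ge> r^2/2" shows "ww2 r x \<ge> 0"
proof -
  have "4*x^2/r^4 - 2/r^2 = (2/r^4) * (2*x^2 - r^2)" using assms by (simp add: field_simps eval_nat_numeral)
  moreover have "2*x^2 - r^2 \<ge> 0" using assms by simp
  ultimately have "4*x^2/r^4 - 2/r^2 \<ge> 0" using assms by simp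
  then show ?thesis unfolding ww2_def by (intro mult_nonneg_nonneg) (simp_all add: ww_pos less_imp_le)
qed

lemma ww2_nonpos: assumes "r > 0" "x^2 \<le> r^2/2" shows "ww2 r x \<le> 0"
proof -
  have "4*x^2/r^4 - 2/r^2 = (2/r^4) * (2*x^2 - r^2)" using assms by (simp add: field_simps eval_nat_numeral)
  moreover have "(2/r^4) * (2*x^2 - r^2) \<le> 0" by (rule mult_nonneg_nonpos) (use assms in auto)
  ultimately have "4*x^2/r^4 - 2/r^2 \<le> 0" by linarith
  then show ?thesis unfolding ww2_def by (intro mult_nonpos_nonneg) (simp_all add: ww_pos less_imp_le)
qed

lemma xs_pos: "r > 0 \<Longrightarrow> xs r > 0" by (simp add: xs_def)

lemma VV_cont: assumes "r > 0" shows "continuous_on UNIV (VV r)"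
proof -
  have inner: "continuous_on {x \<in> UNIV. - xs r \<le> x}
     (\<lambda>x. if x \<le> xs r then 2 * MM r - ww1 r x else 4 * MM r + ww1 r x)"
    by (rule continuous_on_cases_le) (auto intro!: continuous_intros cont_ww1 simp: ww1_xs[OF assms])
  show ?thesis unfolding VV_def[abs_def]
    by (rule continuous_on_cases_le[OF _ inner]) (auto intro!: continuous_intros cont_ww1 simp: ww1_xs[OF assms] xs_pos[OF assms] less_imp_le)
qed

lemma VV_deriv: assumes "r > 0" "x \<noteq> xs r" "x \<noteq> - xs r"
  shows "(VV r has_real_derivative \<bar>ww2 r x\<bar>) (at x)"
proof -
  have sq1: "x^2 \<ge> r^2/2" if "x < - xs r"
  proof -
    have "(xs r)^2 \<le> (-x)^2" by (rule power_mono) (use that xs_pos[OF assms(1)] in auto)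
    then show ?thesis using xs_sq[OF assms(1)] by simp
  qed
  have sq2: "x^2 \<ge> r^2/2" if "x > xs r"
  proof -
    have "(xs r)^2 \<le> x^2" by (rule power_mono) (use that xs_pos[OF assms(1)] in auto)
    then show ?thesis using xs_sq[OF assms(1)] by simp
  qed
  have sq3: "x^2 \<le> r^2/2" if "x > - xs r" "x < xs r"
  proof -
    have "\<bar>x\<bar>^2 \<le> (xs r)^2" by (rule power_mono) (use that in auto)
    then show ?thesis using xs_sq[OF assms(1)] by simp
  qed
  consider "x < - xs r" | "- xs r < x \<and> x < xs r" | "x > xs r" using assms by linarith
  then show ?thesis
  proof cases
    case 1
    have "(ww1 r has_real_derivative \<bar>ww2 r x\<bar>) (at x)"
      using ww1_deriv[of r x] assms ww2_nonneg[OF assms(1) sq1[OF 1]] by simp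
    then show ?thesis
      by (rule has_field_derivative_transform_within_open[where S="{..< - xs r}"]) (use 1 in \<open>auto simp: VV_def\<close>)
  next
    case 2
    have "((\<lambda>x. 2 * MM r - ww1 r x) has_real_derivative - ww2 r x) (at x)"
      using assms by (auto intro!: derivative_eq_intros ww1_deriv)
    then have "((\<lambda>x. 2 * MM r - ww1 r x) has_real_derivative \<bar>ww2 r x\<bar>) (at x)"
      using ww2_nonpos[OF assms(1) sq3] 2 by simp
    then show ?thesis
      by (rule has_field_derivative_transform_within_open[where S="{- xs r <..< xs r}"]) (use 2 in \<open>auto simp: VV_def\<close>)
  next
    case 3
    have "((\<lambda>x. 4 * MM r + ww1 r x) has_real_derivative ww2 r x) (at x)"
      using assms by (auto intro!: derivative_eq_intros ww1_deriv)
    then have "((\<lambda>x. 4 * MM r + ww1 r x) has_real_derivative \<bar>ww2 r x\<bar>) (at x)"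
      using ww2_nonneg[OF assms(1) sq2[OF 3]] by simp
    then show ?thesis
      by (rule has_field_derivative_transform_within_open[where S="{xs r <..}"])
         (use 3 xs_pos[OF assms(1)] in \<open>auto simp: VV_def\<close>)
  qed
qed

lemma VV_has_integral: assumes "r > 0" "p \<le> q"
  shows "((\<lambda>x. \<bar>ww2 r x\<bar>) has_integral (VV r q - VV r p)) {p..q}"
proof (rule fundamental_theorem_of_calculus_interior_strong[where S="{xs r, - xs r}"])
  show "continuous_on {p..q} (VV r)" using VV_cont[OF assms(1)] continuous_on_subset by blast
  fix x assume "x \<in> {p<..<q} - {xs r, - xs r}"
  then show "(VV r has_vector_derivative \<bar>ww2 r x\<bar>) (at x)"
    using VV_deriv[OF assms(1)] by (auto simp: has_real_derivative_iff_has_vector_derivative[symmetric])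
qed (use assms in auto)

lemma half_cell:
  assumes r: "r > 0" and pq: "p \<le> q" "q - p = 1/2" and e: "e = p \<or> e = q"
  defines "G \<equiv> (\<lambda>x. ((x-e)^2/2 - 1/16) * ww1 r x - (x - e) * ww r x)"
  shows "\<bar>integral {p..q} (ww r) + G q - G p\<bar> \<le> (1/16) * (VV r q - VV r p)"
proof -
  have dG: "(G has_real_derivative (((x-e)^2/2 - 1/16) * ww2 r x - ww r x)) (at x)" for x
  proof -
    have "(G has_real_derivative ((x-e) * ww1 r x + ((x-e)^2/2 - 1/16) * ww2 r x - (ww r x + (x-e) * ww1 r x))) (at x)"
      unfolding G_def using r
      apply (auto intro!: derivative_eq_intros ww_deriv ww1_deriv)
      done
    then show ?thesis by (simp add: algebra_simps)
  qed
  have f1: "((\<lambda>x. ((x-e)^2/2 - 1/16) * ww2 r x - ww r x) has_integral (G q - G p)) {p..q}"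
    by (rule fundamental_theorem_of_calculus[OF pq(1)])
       (auto intro: has_field_derivative_at_within simp: has_real_derivative_iff_has_vector_derivative[symmetric] dG)
  have iw: "(ww r has_integral integral {p..q} (ww r)) {p..q}"
    by (intro integrable_integral integrable_continuous_real cont_ww)
  have f2: "((\<lambda>x. ((x-e)^2/2 - 1/16) * ww2 r x) has_integral (G q - G p + integral {p..q} (ww r))) {p..q}"
    using has_integral_add[OF f1 iw] by simp
  have f3: "((\<lambda>x. (1/16) * \<bar>ww2 r x\<bar>) has_integral ((1/16) * (VV r q - VV r p))) {p..q}"
    using has_integral_mult_right[OF VV_has_integral[OF r pq(1)], of "1/16"] by simp
  have bnd: "norm (((x-e)^2/2 - 1/16) * ww2 r x) \<le> (1/16) * \<bar>ww2 r x\<bar>" if "x \<in> {p..q}" for x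
  proof -
    have "\<bar>x - e\<bar> \<le> 1/2" using that e pq by (cases "e = p") (auto simp: abs_le_iff)
    then have "\<bar>x - e\<bar>^2 \<le> (1/2)^2" by (intro power_mono) auto
    then have a: "(x-e)^2 \<le> 1/4" by (simp add: power2_eq_square)
    have b: "(x-e)^2 \<ge> 0" by simp
    have "\<bar>(x-e)^2/2 - 1/16\<bar> \<le> 1/16" unfolding abs_le_iff using a b by (intro conjI) linarith+
    then have "\<bar>(x-e)^2/2 - 1/16\<bar> * \<bar>ww2 r x\<bar> \<le> (1/16) * \<bar>ww2 r x\<bar>"
      by (rule mult_right_mono) simp
    then show ?thesis by (simp add: abs_mult)
  qed
  have "norm (integral {p..q} (\<lambda>x. ((x-e)^2/2 - 1/16) * ww2 r x)) \<le> integral {p..q} (\<lambda>x. (1/16) * \<bar>ww2 r x\<bar>)"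
    by (rule integral_norm_bound_integral) (use f2 f3 bnd in auto)
  then have bd: "\<bar>G q - G p + integral {p..q} (ww r)\<bar> \<le> (1/16) * (VV r q - VV r p)"
    unfolding integral_unique[OF f2] integral_unique[OF f3] real_norm_def .
  have eq: "integral {p..q} (ww r) + G q - G p = G q - G p + integral {p..q} (ww r)" by simp
  show ?thesis unfolding eq by (rule bd)
qed

lemma half_left: assumes r: "r > 0"
  shows "\<bar>integral {c..c+1/2} (ww r) + (1/16) * ww1 r (c+1/2) - (1/2) * ww r (c+1/2) + (1/16) * ww1 r c\<bar>
     \<le> (1/16) * (VV r (c+1/2) - VV r c)"
proof -
  have h: "\<bar>integral {c..c+1/2} (ww r) + (((c+1/2-c)^2/2 - 1/16) * ww1 r (c+1/2) - (c+1/2 - c) * ww r (c+1/2))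
     - (((c-c)^2/2 - 1/16) * ww1 r c - (c - c) * ww r c)\<bar> \<le> (1/16) * (VV r (c+1/2) - VV r c)"
    using half_cell[OF r, of c "c+1/2" c] by simp
  have e1: "((c+1/2-c)^2/2 - 1/16) = (1/16::real)" by (simp add: power2_eq_square)
  have e2: "(c+1/2 - c) = (1/2::real)" by simp
  have e3: "((c-c)^2/2 - 1/16) = -(1/16::real)" by simp
  show ?thesis using h by (simp add: algebra_simps power2_eq_square)
qed

lemma half_right: assumes r: "r > 0"
  shows "\<bar>integral {c+1/2..c+1} (ww r) - (1/16) * ww1 r (c+1) - (1/16) * ww1 r (c+1/2) - (1/2) * ww r (c+1/2)\<bar>
     \<le> (1/16) * (VV r (c+1) - VV r (c+1/2))"
proof -
  have h: "\<bar>integral {c+1/2..c+1} (ww r) + (((c+1-(c+1))^2/2 - 1/16) * ww1 r (c+1) - (c+1 - (c+1)) * ww r (c+1))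
     - (((c+1/2-(c+1))^2/2 - 1/16) * ww1 r (c+1/2) - (c+1/2 - (c+1)) * ww r (c+1/2))\<bar> \<le> (1/16) * (VV r (c+1) - VV r (c+1/2))"
    using half_cell[OF r, of "c+1/2" "c+1" "c+1"] by simp
  have e1: "((c+1/2-(c+1))^2/2 - 1/16) = (1/16::real)" by (simp add: power2_eq_square)
  have e2: "(c+1/2 - (c+1)) = -(1/2::real)" by simp
  have e3: "((c+1-(c+1))^2/2 - 1/16) = -(1/16::real)" by simp
  show ?thesis using h by (simp add: algebra_simps power2_eq_square)
qed

lemma cell: assumes r: "r > 0"
  shows "\<bar>integral {c..c+1} (ww r) - ww r (c+1/2) - (1/16) * (ww1 r (c+1) - ww1 r c)\<bar>
     \<le> (1/16) * (VV r (c+1) - VV r c)"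
proof -
  have comb: "integral {c..c+1/2} (ww r) + integral {c+1/2..c+1} (ww r) = integral {c..c+1} (ww r)"
    by (rule Henstock_Kurzweil_Integration.integral_combine) (auto intro: integrable_continuous_real cont_ww)
  show ?thesis using half_left[OF r, of c] half_right[OF r, of c] comb
    unfolding abs_le_iff by argo
qed

lemma cells_sum: assumes r: "r > 0"
  shows "\<bar>integral {L..L + real M} (ww r) - (\<Sum>i<M. ww r (L + real i + 1/2)) - (1/16) * (ww1 r (L + real M) - ww1 r L)\<bar>
     \<le> (1/16) * (VV r (L + real M) - VV r L)"
proof (induction M)
  case 0
  then show ?case by simp
next
  case (Suc M)
  have comb: "integral {L..L + real M} (ww r) + integral {L + real M..L + real M + 1} (ww r) = integral {L..L + real M + 1} (ww r)"
    by (rule Henstock_Kurzweil_Integration.integral_combine) (auto intro: integrable_continuous_real cont_ww)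
  have c: "\<bar>integral {L + real M..L + real M + 1} (ww r) - ww r (L + real M + 1/2) - (1/16) * (ww1 r (L + real M + 1) - ww1 r (L + real M))\<bar>
     \<le> (1/16) * (VV r (L + real M + 1) - VV r (L + real M))" using cell[OF r, of "L + real M"] by simp
  have s: "(\<Sum>i<Suc M. ww r (L + real i + 1/2)) = (\<Sum>i<M. ww r (L + real i + 1/2)) + ww r (L + real M + 1/2)" by simp
  have e: "L + real (Suc M) = L + real M + 1" by simp
  show ?case using Suc.IH c comb unfolding s e abs_le_iff by argo
qed

lemma ww_normal: assumes "r > 0"
  shows "ww r x = (r * sqrt pi) * normal_density 0 (r / sqrt 2) x"
proof -
  have "2 * pi * (r / sqrt 2)^2 = pi * r^2" by (simp add: power_divide)
  moreover have "sqrt (pi * r^2) = sqrt pi * r" using assms by (simp add: real_sqrt_mult)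
  moreover have "2 * (r / sqrt 2)^2 = r^2" by (simp add: power_divide)
  ultimately show ?thesis using assms by (simp add: normal_density_def ww_def field_simps)
qed

lemma ww_fun: "r > 0 \<Longrightarrow> ww r = (\<lambda>x. (r * sqrt pi) * normal_density 0 (r / sqrt 2) x)"
  by (intro ext ww_normal)

lemma ww_integrable: "r > 0 \<Longrightarrow> integrable lborel (ww r)"
  by (subst ww_fun) auto

lemma ww_integral_lborel: "r > 0 \<Longrightarrow> (\<integral>x. ww r x \<partial>lborel) = r * sqrt pi"
  by (subst ww_fun) auto

lemma ww_has_integral: assumes "r > 0" shows "(ww r has_integral (r * sqrt pi)) UNIV"
  using has_integral_integral_lborel[OF ww_integrable[OF assms]] ww_integral_lborel[OF assms] by simp

lemma ww_integral_le: assumes "r > 0" "L \<le> R" shows "integral {L..R} (ww r) \<le> r * sqrt pi"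
proof -
  have "integral {L..R} (ww r) \<le> integral UNIV (ww r)"
    by (rule integral_subset_le) (auto intro: integrable_continuous_real cont_ww
        has_integral_integrable[OF ww_has_integral[OF assms(1)]] less_imp_le[OF ww_pos])
  then show ?thesis using integral_unique[OF ww_has_integral[OF assms(1)]] by simp
qed

lemma ww1_sign: "r > 0 \<Longrightarrow> x \<ge> 0 \<Longrightarrow> ww1 r x \<le> 0" "r > 0 \<Longrightarrow> x \<le> 0 \<Longrightarrow> ww1 r x \<ge> 0"
  using ww_pos[of r x] by (auto simp: ww1_def zero_le_mult_iff zero_le_divide_iff mult_le_0_iff divide_le_0_iff)

lemma VV_left: "x \<le> - xs r \<Longrightarrow> VV r x = ww1 r x" by (simp add: VV_def)
lemma VV_right: assumes "r > 0" "x \<ge> xs r" shows "VV r x = 4 * MM r + ww1 r x"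
  using assms xs_pos[OF assms(1)] ww1_xs[OF assms(1)] by (auto simp: VV_def)

definition idx :: "nat \<Rightarrow> int set" where "idx N = (\<lambda>i. int i - int N) ` {..<2*N+1}"

lemma idx_finite: "finite (idx N)" by (simp add: idx_def)

lemma idx_sum: "(\<Sum>k\<in>idx N. g k) = (\<Sum>i<2*N+1. g (int i - int N))"
proof -
  have "inj_on (\<lambda>i. int i - int N) {..<2*N+1}" by (auto simp: inj_on_def)
  then show ?thesis unfolding idx_def by (simp add: sum.reindex)
qed

lemma idx_contains: assumes "\<bar>k\<bar> \<le> int N" shows "k \<in> idx N"
proof -
  have "k = int (nat (k + int N)) - int N" using assms by simp
  moreover have "nat (k + int N) < 2*N+1" using assms by simp
  ultimately show ?thesis unfolding idx_def by blast
qed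

lemma box_bound:
  fixes a r :: real and N :: nat
  assumes r: "r > 0" and N: "real N \<ge> xs r + \<bar>a\<bar>"
  shows "(\<Sum>k\<in>idx N. ww r (of_int k - a)) \<le> integral {-real N - a - 1/2 .. real N - a + 1/2} (ww r) + MM r / 4"
    and "(\<Sum>k\<in>idx N. ww r (of_int k - a)) \<ge> integral {-real N - a - 1/2 .. real N - a + 1/2} (ww r) - MM r / 4"
proof -
  define L where "L = -real N - a - 1/2"
  have R: "L + real (2*N+1) = real N - a + 1/2" by (simp add: L_def)
  have s: "(\<Sum>k\<in>idx N. ww r (of_int k - a)) = (\<Sum>i<2*N+1. ww r (L + real i + 1/2))"
    unfolding idx_sum by (intro sum.cong refl) (simp add: L_def algebra_simps)
  have c: "\<bar>integral {L..real N - a + 1/2} (ww r) - (\<Sum>i<2*N+1. ww r (L + real i + 1/2)) - (1/16) * (ww1 r (real N - a + 1/2) - ww1 r L)\<bar>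
     \<le> (1/16) * (VV r (real N - a + 1/2) - VV r L)"
    using cells_sum[OF r, of L "2*N+1"] unfolding R .
  have xp: "xs r > 0" using xs_pos[OF r] .
  have Lle: "L \<le> - xs r" using N by (simp add: L_def)
  have Rge: "real N - a + 1/2 \<ge> xs r" using N by simp
  have v1: "VV r L = ww1 r L" using VV_left[OF Lle] .
  have v2: "VV r (real N - a + 1/2) = 4 * MM r + ww1 r (real N - a + 1/2)" using VV_right[OF r Rge] .
  have w1: "ww1 r (real N - a + 1/2) \<le> 0" using ww1_sign(1)[OF r] Rge xp by simp
  have w2: "ww1 r L \<ge> 0" using ww1_sign(2)[OF r] Lle xp by simp
  show "(\<Sum>k\<in>idx N. ww r (of_int k - a)) \<le> integral {-real N - a - 1/2 .. real N - a + 1/2} (ww r) + MM r / 4"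
    using c w1 w2 unfolding s v1 v2 L_def[symmetric] abs_le_iff by argo
  show "(\<Sum>k\<in>idx N. ww r (of_int k - a)) \<ge> integral {-real N - a - 1/2 .. real N - a + 1/2} (ww r) - MM r / 4"
    using c w1 w2 unfolding s v1 v2 L_def[symmetric] abs_le_iff by argo
qed

lemma exists_N: "\<exists>N::nat. real N \<ge> x" by (meson real_arch_simple)

lemma finite_in_idx: assumes "finite F" shows "\<exists>N0. \<forall>N\<ge>N0. F \<subseteq> idx N"
proof -
  obtain N0 where "\<forall>k\<in>F. \<bar>k\<bar> \<le> int N0"
  proof -
    have "finite (abs ` F)" using assms by simp
    then obtain m where "\<forall>x\<in>abs ` F. x \<le> m" using finite_nat_set_iff_bounded_le by (metis bdd_above_def bdd_above_finite) 
    then show ?thesis using that[of "nat m"] by force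
  qed
  then show ?thesis using idx_contains by (meson order_trans of_nat_le_iff subsetI)
qed

lemma S_main:
  fixes a r :: real
  assumes r: "r > 0"
  shows "(\<lambda>k::int. ww r (of_int k - a)) summable_on UNIV"
    and "infsum (\<lambda>k::int. ww r (of_int k - a)) UNIV \<le> r * sqrt pi + MM r / 4"
    and "infsum (\<lambda>k::int. ww r (of_int k - a)) UNIV \<ge> r * sqrt pi - MM r / 4"
proof -
  let ?g = "\<lambda>k::int. ww r (of_int k - a)"
  have fin: "sum ?g F \<le> r * sqrt pi + MM r / 4" if F: "finite F" for F
  proof -
    obtain N0 where N0: "\<forall>N\<ge>N0. F \<subseteq> idx N" using finite_in_idx[OF F] by blast
    obtain N1 :: nat where N1: "real N1 \<ge> xs r + \<bar>a\<bar>" using exists_N by blast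
    define N where "N = max N0 N1"
    have FN: "F \<subseteq> idx N" using N0 by (simp add: N_def)
    have NN: "real N \<ge> xs r + \<bar>a\<bar>" using N1 by (simp add: N_def)
    have "sum ?g F \<le> sum ?g (idx N)"
      by (rule sum_mono2[OF idx_finite FN]) (simp add: less_imp_le[OF ww_pos])
    also have "\<dots> \<le> integral {-real N - a - 1/2 .. real N - a + 1/2} (ww r) + MM r / 4"
      by (rule box_bound(1)[OF r NN])
    also have "\<dots> \<le> r * sqrt pi + MM r / 4" using ww_integral_le[OF r, of "-real N - a - 1/2" "real N - a + 1/2"] by simp
    finally show ?thesis .
  qed
  show sm: "?g summable_on UNIV"
    by (rule nonneg_bdd_above_summable_on) (auto simp: less_imp_le[OF ww_pos] bdd_above_def intro!: exI[of _ "r * sqrt pi + MM r / 4"] fin)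
  show "infsum ?g UNIV \<le> r * sqrt pi + MM r / 4"
    by (rule infsum_le_finite_sums[OF sm]) (rule fin)
  show "infsum ?g UNIV \<ge> r * sqrt pi - MM r / 4"
  proof (rule field_le_epsilon[where x="r * sqrt pi - MM r / 4", THEN order_trans])
    fix \<epsilon> :: real assume \<epsilon>: "\<epsilon> > 0"
    obtain B where B: "B > 0" and Bp: "\<And>l u. ball 0 B \<subseteq> cbox l u \<Longrightarrow>
        norm (integral (cbox l u) (\<lambda>x. if x \<in> UNIV then ww r x else 0) - r * sqrt pi) < \<epsilon>"
      using ww_has_integral[OF r] \<epsilon> unfolding has_integral_alt' by blast
    obtain N :: nat where NN: "real N \<ge> xs r + \<bar>a\<bar> + B" using exists_N by blast
    have NN': "real N \<ge> xs r + \<bar>a\<bar>" using NN B by simp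
    have "ball 0 B \<subseteq> cbox (-real N - a - 1/2) (real N - a + 1/2)"
      using NN xs_pos[OF r] by (auto simp: dist_real_def abs_less_iff)
    then have "norm (integral {-real N - a - 1/2 .. real N - a + 1/2} (ww r) - r * sqrt pi) < \<epsilon>"
      using Bp by simp
    then have i: "integral {-real N - a - 1/2 .. real N - a + 1/2} (ww r) \<ge> r * sqrt pi - \<epsilon>" by simp
    have "sum ?g (idx N) \<le> infsum ?g UNIV"
    proof -
      have "sum ?g (idx N) = infsum ?g (idx N)" by (simp add: idx_finite)
      also have "\<dots> \<le> infsum ?g UNIV"
        by (rule infsum_mono_neutral) (auto simp: idx_finite sm less_imp_le[OF ww_pos])
      finally show ?thesis .
    qed
    then show "r * sqrt pi - MM r / 4 \<le> infsum ?g UNIV + \<epsilon>"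
      using box_bound(2)[OF r NN'] i by linarith
  qed simp
qed

lemma geo_bound:
  fixes q :: real
  assumes q: "0 \<le> q" "q < 1" and G: "finite G" and h: "inj_on h G"
  shows "(\<Sum>x\<in>G. q ^ h x) \<le> 1 / (1 - q)"
proof -
  have "(\<Sum>x\<in>G. q ^ h x) = (\<Sum>i\<in>h ` G. q ^ i)" by (simp add: sum.reindex[OF h])
  also have "\<dots> \<le> (\<Sum>i. q ^ i)"
    by (rule sum_le_suminf) (use q G in \<open>auto intro: summable_geometric\<close>)
  also have "\<dots> = 1 / (1 - q)" using suminf_geometric[of q] q by simp
  finally show ?thesis .
qed

lemma ww_le1: "ww r x \<le> 1" by (simp add: ww_def)

lemma term_bound:
  fixes a r :: real and k k0 :: int
  assumes r: "r > 0" and d: "\<bar>of_int k0 - a\<bar> \<le> 1/2" and k: "k \<noteq> k0"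
  shows "ww r (of_int k - a) \<le> exp (-1/(4*r^2)) * exp (-1/r^2) ^ (nat \<bar>k - k0\<bar> - 1)"
proof -
  define n where "n = nat \<bar>k - k0\<bar>"
  have n1: "n \<ge> 1" using k by (simp add: n_def)
  have nr: "real n = \<bar>of_int k - of_int k0\<bar>" by (simp add: n_def)
  have t: "\<bar>of_int k - a\<bar> \<ge> real n - 1/2" using d nr by linarith
  have n12: "real n - 1/2 \<ge> 0" using n1 by simp
  have "(real n - 1/2)^2 \<le> (of_int k - a)^2"
    using power_mono[OF t n12, of 2] by simp
  moreover have "(real n - 1/2)^2 \<ge> real n - 3/4"
  proof -
    have "(real n - 1/2)^2 - (real n - 3/4) = (real n - 1)^2" by (simp add: power2_eq_square algebra_simps)
    then show ?thesis by (smt (verit) zero_le_power2)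
  qed
  ultimately have sq: "(of_int k - a)^2 \<ge> real n - 3/4" by linarith
  have "exp (-1/r^2) ^ (n - 1) = exp (real (n - 1) * (-1/r^2))" by (rule exp_of_nat_mult[symmetric])
  then have "exp (-1/(4*r^2)) * exp (-1/r^2) ^ (n - 1) = exp (-1/(4*r^2) + real (n - 1) * (-1/r^2))"
    by (simp only: exp_add)
  also have "-1/(4*r^2) + real (n - 1) * (-1/r^2) = - (real n - 3/4) / r^2"
    using n1 r by (simp add: of_nat_diff field_simps)
  finally have e: "exp (-1/(4*r^2)) * exp (-1/r^2) ^ (n - 1) = exp (- (real n - 3/4) / r^2)" .
  have F: "(real n - 3/4) / r^2 \<le> (of_int k - a)^2 / r^2" by (rule divide_right_mono[OF sq]) simp
  have "- ((of_int k - a)^2) / r^2 \<le> - (real n - 3/4) / r^2"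
    unfolding minus_divide_left[symmetric] neg_le_iff_le by (rule F)
  then show ?thesis unfolding e[unfolded n_def] ww_def n_def by simp
qed

lemma S_small:
  fixes a r :: real
  assumes r: "r > 0"
  shows "infsum (\<lambda>k::int. ww r (of_int k - a)) UNIV \<le> 1 + 2 * exp (-1/(4*r^2)) / (1 - exp (-1/r^2))"
proof -
  let ?g = "\<lambda>k::int. ww r (of_int k - a)"
  define p where "p = exp (-1/(4*r^2))"
  define q where "q = exp (-1/r^2)"
  have q0: "0 \<le> q" and q1: "q < 1" using r by (auto simp: q_def)
  have p0: "0 \<le> p" by (simp add: p_def)
  define k0 where "k0 = \<lfloor>a + 1/2\<rfloor>"
  have d1: "of_int k0 \<le> a + 1/2" unfolding k0_def by (rule of_int_floor_le)
  have d2: "a + 1/2 < of_int k0 + 1" unfolding k0_def by (rule real_of_int_floor_add_one_gt)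
  have d: "\<bar>of_int k0 - a\<bar> \<le> 1/2" using d1 d2 unfolding abs_le_iff by (intro conjI) linarith+
  define m where "m k = (if k = k0 then 1 else p * q ^ (nat \<bar>k - k0\<bar> - 1))" for k
  have gm: "?g k \<le> m k" for k
    using term_bound[OF r d, of k] ww_le1[of r] by (auto simp: m_def p_def q_def)
  have fin: "sum ?g F \<le> 1 + 2 * p / (1 - q)" if F: "finite F" for F
  proof -
    define F0 where "F0 = F \<inter> {k0}"
    define F1 where "F1 = F \<inter> {k. k > k0}"
    define F2 where "F2 = F \<inter> {k. k < k0}"
    have FF: "F = F0 \<union> (F1 \<union> F2)" by (auto simp: F0_def F1_def F2_def)
    have fins: "finite F0" "finite F1" "finite F2" using F by (auto simp: F0_def F1_def F2_def)
    have split: "sum m F = sum m F0 + (sum m F1 + sum m F2)"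
      apply (subst FF)
      apply (subst sum.union_disjoint)
      using fins apply (auto simp: F0_def F1_def F2_def)[3]
      apply (subst sum.union_disjoint)
      using fins by (auto simp: F0_def F1_def F2_def)
    have s0: "sum m F0 \<le> 1"
    proof -
      have "sum m F0 \<le> sum m {k0}"
        by (rule sum_mono2) (auto simp: F0_def m_def p0 q0)
      then show ?thesis by (simp add: m_def)
    qed
    have s1: "sum m F1 \<le> p / (1 - q)"
    proof -
      have "sum m F1 = p * (\<Sum>k\<in>F1. q ^ (nat (k - k0) - 1))"
        by (simp add: sum_distrib_left m_def F1_def)
      also have "(\<Sum>k\<in>F1. q ^ (nat (k - k0) - 1)) \<le> 1 / (1 - q)"
        by (rule geo_bound[OF q0 q1 fins(2)]) (auto simp: inj_on_def F1_def)
      finally show ?thesis using p0 by (simp add: mult_left_mono divide_inverse)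
    qed
    have s2: "sum m F2 \<le> p / (1 - q)"
    proof -
      have "sum m F2 = p * (\<Sum>k\<in>F2. q ^ (nat (k0 - k) - 1))"
        by (simp add: sum_distrib_left m_def F2_def)
      also have "(\<Sum>k\<in>F2. q ^ (nat (k0 - k) - 1)) \<le> 1 / (1 - q)"
        by (rule geo_bound[OF q0 q1 fins(3)]) (auto simp: inj_on_def F2_def)
      finally show ?thesis using p0 by (simp add: mult_left_mono divide_inverse)
    qed
    have "sum ?g F \<le> sum m F" by (rule sum_mono) (rule gm)
    then show ?thesis using split s0 s1 s2 by simp
  qed
  have "infsum ?g UNIV \<le> 1 + 2 * p / (1 - q)"
    by (rule infsum_le_finite_sums[OF S_main(1)[OF r]]) (rule fin)
  then show ?thesis by (simp add: p_def q_def)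
qed

lemma exp1_ge: "exp (1::real) \<ge> (27182/10000)"
proof -
  have "exp (1::real) \<ge> 5837465777 / 2147483648 - inverse (2 ^ 32)"
    using abs_le_D2[OF e_approx_32] by linarith
  moreover have "5837465777 / 2147483648 - inverse (2 ^ 32) \<ge> ((27182/10000)::real)" by simp
  ultimately show ?thesis by linarith
qed

lemma Eh_sq: "exp (-1/2::real) ^ 2 = exp (-1)"
  by (simp add: power2_eq_square exp_add[symmetric])

lemma exp_m1_le: "exp (-1::real) \<le> (03679/10000)"
proof -
  have "exp (-1::real) = 1 / exp 1" by (simp add: exp_minus field_simps)
  also have "\<dots> \<le> 1 / (27182/10000)" using exp1_ge by (intro divide_left_mono) auto
  also have "\<dots> \<le> (03679/10000)" by simp
  finally show ?thesis .
qed

lemma Eh_le: "exp (-1/2::real) \<le> (06066/10000)"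
proof -
  have "((06066/10000)::real) ^ 2 = (036796356/100000000)" by (simp add: power2_eq_square)
  then have "exp (-1/2::real) ^ 2 \<le> (06066/10000) ^ 2" using exp_m1_le Eh_sq by linarith
  then show ?thesis by (rule power2_le_imp_le) simp
qed

lemma sqrt_le_sq: fixes x c :: real assumes "0 \<le> c" "x \<le> c^2" shows "sqrt x \<le> c"
  using real_sqrt_le_mono[OF assms(2)] assms(1) by simp

lemma sqrt2_le: "sqrt 2 \<le> (14143/10000::real)"
  by (rule sqrt_le_sq) (simp_all add: power2_eq_square)

lemma pi_le: "pi \<le> (31416/10000::real)"
proof -
  have "pi \<le> 3.1415926535899" by (rule pi_approx(2))
  moreover have "(3.1415926535899::real) \<le> 31416/10000" by simp
  ultimately show ?thesis by linarith
qed

lemma pi_ge: "pi \<ge> (31415/10000::real)"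
proof -
  have "pi \<ge> 3.141592653588" by (rule pi_approx(1))
  moreover have "(3.141592653588::real) \<ge> 31415/10000" by simp
  ultimately show ?thesis by linarith
qed

lemma sqrt2pi_le: "sqrt 2 * sqrt pi \<le> (25067/10000)"
proof -
  have "((25067/10000)::real) ^ 2 = (628354489/100000000)" by (simp add: power2_eq_square)
  then have "2 * pi \<le> (25067/10000) ^ 2" using pi_le by linarith
  then have "sqrt (2 * pi) \<le> (25067/10000)" by (rule sqrt_le_sq[rotated]) simp
  then show ?thesis by (simp add: real_sqrt_mult)
qed

lemma N1: "sqrt 2 * sqrt pi * exp (-1/2) \<le> (153/100)"
proof -
  have "sqrt 2 * sqrt pi * exp (-1/2) \<le> (25067/10000) * (06066/10000)"
    by (rule mult_mono[OF sqrt2pi_le Eh_le]) auto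
  then show ?thesis by simp
qed

lemma sqrt2_ge: "sqrt 2 \<ge> ((1414/1000)::real)"
  by (rule real_le_rsqrt) (simp add: power2_eq_square)

lemma p_small: fixes r :: real assumes r: "r > 0" shows "exp (-1/(4*r^2)) \<le> 9 * r^4"
proof -
  define y where "y = 1/(4*r^2)"
  have y0: "y > 0" using r by (simp add: y_def)
  have "exp (y/2) = exp 1 * exp (y/2 - 1)" by (simp add: exp_add[symmetric])
  moreover have "exp (y/2 - 1) \<ge> y/2" using exp_ge_add_one_self[of "y/2 - 1"] by simp
  moreover have "exp 1 * (y/2) \<le> exp 1 * exp (y/2 - 1)"
    using calculation(2) by (intro mult_left_mono) auto
  moreover have "(27/10) * (y/2) \<le> exp 1 * (y/2)"
    using exp1_ge y0 by (intro mult_right_mono) auto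
  ultimately have "exp (y/2) \<ge> (27/10) * (y/2)" by linarith
  then have "exp (y/2) ^ 2 \<ge> ((27/10) * (y/2)) ^ 2" using y0 by (intro power_mono) auto
  moreover have "exp (y/2) ^ 2 = exp y" by (simp add: power2_eq_square exp_add[symmetric])
  ultimately have ey: "exp y \<ge> (18225/10000) * y^2" by (simp add: power2_eq_square)
  have "exp (-1/(4*r^2)) = 1 / exp y" by (simp add: y_def exp_minus field_simps)
  also have "\<dots> \<le> 1 / ((18225/10000) * y^2)" using ey y0 by (intro divide_left_mono) auto
  also have "1 / ((18225/10000) * y^2) = (16 / (18225/10000)) * r^4" using r by (simp add: y_def field_simps eval_nat_numeral)
  also have "\<dots> \<le> 9 * r^4" using r by (intro mult_right_mono) auto
  finally show ?thesis .
qed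

lemma combine:
  fixes r S1 S2 :: real
  assumes r: "r > 0"
    and S1: "0 \<le> S1" "S1 \<le> r * sqrt pi + MM r / 4" "S1 \<ge> r * sqrt pi - MM r / 4"
            "S1 \<le> 1 + 2 * exp (-1/(4*r^2)) / (1 - exp (-1/r^2))"
    and S2: "0 \<le> S2" "S2 \<le> r * sqrt pi + MM r / 4" "S2 \<ge> r * sqrt pi - MM r / 4"
            "S2 \<le> 1 + 2 * exp (-1/(4*r^2)) / (1 - exp (-1/r^2))"
  shows "\<bar>S1 * S2 - (r * sqrt pi)^2\<bar> \<le> 1 + sqrt 2 * r"
proof -
  define u where "u = r * sqrt pi"
  define e where "e = MM r / 4"
  have u0: "u > 0" using r by (simp add: u_def)
  have e0: "e > 0" using r by (simp add: e_def MM_def)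
  have ue: "2 * u * e = sqrt 2 * sqrt pi * exp (-1/2) / 2"
    using r by (simp add: u_def e_def MM_def field_simps)
  have ee: "e^2 = exp (-1) / (8 * r^2)"
    using r Eh_sq by (simp add: e_def MM_def field_simps power_mult_distrib power_divide)
  have ue_le: "2 * u * e \<le> (0765/1000)" using ue N1 by simp
  have s2: "sqrt 2 * r \<ge> (1414/1000) * r" using sqrt2_ge r by (intro mult_right_mono) auto
  have up: "S1 * S2 \<le> u^2 + (1 + sqrt 2 * r)"
  proof (cases "r \<ge> 3/10")
    case True
    have "S1 * S2 \<le> (u + e) * (u + e)"
      using S1 S2 by (intro mult_mono) (auto simp: u_def e_def)
    also have "\<dots> = u^2 + 2 * u * e + e^2" by (simp add: power2_eq_square algebra_simps)
    also have e2b: "e^2 \<le> (052/100)"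
    proof -
      have "e^2 \<le> (03679/10000) / (8 * r^2)" unfolding ee using exp_m1_le r by (intro divide_right_mono) auto
      also have "\<dots> \<le> (03679/10000) / (8 * (3/10)^2)" using True by (intro divide_left_mono mult_left_mono power_mono) auto
      also have "\<dots> \<le> (052/100)" by (simp add: power2_eq_square)
      finally show ?thesis .
    qed
    then have "u^2 + 2 * u * e + e^2 \<le> u^2 + (1 + sqrt 2 * r)"
      using ue_le s2 True e2b by linarith
    finally show ?thesis by simp
  next
    case False
    define p where "p = exp (-1/(4*r^2))"
    define q where "q = exp (-1/r^2)"
    have p9: "p \<le> 9 * r^4" using p_small[OF r] by (simp add: p_def)
    have r4: "r^4 \<le> (0027/1000) * r"
    proof -
      have "r^3 \<le> (3/10)^3" using False r by (intro power_mono) auto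
      also have "(3/10::real)^3 = (0027/1000)" by (simp add: eval_nat_numeral)
      finally have "r^3 * r \<le> (0027/1000) * r" using r by (intro mult_right_mono) auto
      then show ?thesis by (simp add: eval_nat_numeral)
    qed
    have qp: "q \<le> p" unfolding p_def q_def using r by (simp add: field_simps)
    have p0: "0 \<le> p" by (simp add: p_def)
    have pr: "p \<le> (0243/1000) * r" using p9 r4 by linarith
    have pb: "p \<le> (0073/1000)" using pr False by linarith
    have q1: "1 - q \<ge> (0927/1000)" using qp pb by linarith
    define A where "A = 2 * p / (1 - q)"
    have A0: "A \<ge> 0" using q1 p0 by (simp add: A_def)
    have "A \<le> 2 * p / (0927/1000)" unfolding A_def using q1 p0 by (intro divide_left_mono) auto
    also have "\<dots> \<le> 2 * ((0243/1000) * r) / (0927/1000)" using pr by (intro divide_right_mono) auto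
    finally have Ar: "A \<le> (0525/1000) * r" using r by simp
    have Ab: "A \<le> (016/100)" using Ar False by linarith
    have "S1 * S2 \<le> (1 + A) * (1 + A)"
      using S1 S2 by (intro mult_mono) (auto simp: A_def p_def q_def)
    also have "\<dots> = 1 + A * (2 + A)" by (simp add: algebra_simps)
    also have "A * (2 + A) \<le> ((0525/1000) * r) * (216/100)" using Ar Ab A0 by (intro mult_mono) auto
    finally have "S1 * S2 \<le> 1 + (1134/1000) * r" by simp
    moreover have "u^2 \<ge> 0" by simp
    ultimately show ?thesis using s2 r by linarith
  qed
  have lo: "u^2 - S1 * S2 \<le> 1 + sqrt 2 * r"
  proof (cases "r \<le> (08/10)")
    case True
    have "S1 * S2 \<ge> 0" using S1 S2 by simp
    moreover have "u^2 = pi * r^2" by (simp add: u_def power_mult_distrib)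
    moreover have "pi * r^2 \<le> 1 + (1414/1000) * r"
    proof -
      have "pi * r \<le> (31416/10000) * (08/10)" using pi_le True r by (intro mult_mono) auto
      then have "r * (pi * r) \<le> r * ((31416/10000) * (08/10))" using r by (intro mult_left_mono) auto
      moreover have "pi * r^2 = r * (pi * r)" by (simp add: power2_eq_square)
      ultimately show ?thesis using True r by linarith
    qed
    ultimately show ?thesis using s2 by simp
  next
    case False
    have "e \<le> (06066/10000) * (14143/10000) / (32/10)"
    proof -
      have "MM r = sqrt 2 * exp (-1/2) / r" by (simp add: MM_def)
      moreover have "sqrt 2 * exp (-1/2) \<le> (14143/10000) * (06066/10000)"
        by (intro mult_mono Eh_le sqrt2_le) auto
      ultimately have "MM r \<le> (14143/10000) * (06066/10000) / r" using r by (metis divide_right_mono less_imp_le)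
      also have "\<dots> \<le> (14143/10000) * (06066/10000) / (08/10)" using False by (intro divide_left_mono) auto
      finally show ?thesis by (simp add: e_def)
    qed
    moreover have "u \<ge> (08/10) * (177/100)"
    proof -
      have "sqrt pi \<ge> (177/100)" by (rule real_le_rsqrt) (use pi_ge in \<open>simp add: power2_eq_square\<close>)
      then show ?thesis using False unfolding u_def by (intro mult_mono) auto
    qed
    ultimately have ue0: "u - e \<ge> 0" by simp
    have "(u - e) * (u - e) \<le> S1 * S2"
      using S1 S2 ue0 by (intro mult_mono) (auto simp: u_def e_def)
    moreover have "(u - e) * (u - e) = u^2 - 2 * u * e + e^2" by (simp add: power2_eq_square algebra_simps)
    moreover have "e^2 \<ge> 0" by simp
    ultimately have "u^2 - S1 * S2 \<le> 2 * u * e" by linarith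
    moreover have "sqrt 2 * r \<ge> 0" using r by simp
    ultimately show ?thesis using ue_le by linarith
  qed
  show ?thesis using up lo unfolding u_def[symmetric] abs_le_iff by (intro conjI) linarith+
qed

lemma gauss_nd: fixes \<sigma> :: real assumes "\<sigma> > 0" shows "gauss (\<sigma>^2) t = normal_density 0 \<sigma> t"
proof -
  have e: "(-1/2::real) = - (1/2)" by simp
  have "(2 * pi * \<sigma>^2) powr (-1/2) = inverse ((2 * pi * \<sigma>^2) powr (1/2))" unfolding e by (rule powr_minus)
  also have "\<dots> = inverse (sqrt (2 * pi * \<sigma>^2))" by (subst powr_half_sqrt) auto
  also have "\<dots> = 1 / sqrt (2 * pi * \<sigma>^2)" by (simp add: inverse_eq_divide)
  finally have "(2 * pi * \<sigma>^2) powr (-1/2) = 1 / sqrt (2 * pi * \<sigma>^2)" .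
  then show ?thesis by (simp add: gauss_def normal_density_def)
qed

lemma gauss_fun: fixes \<sigma> :: real assumes "\<sigma> > 0" shows "gauss (\<sigma>^2) = normal_density 0 \<sigma>"
  using gauss_nd[OF assms] by (intro ext) simp

lemma nd_le: fixes \<sigma> :: real assumes "\<sigma> > 0" shows "normal_density 0 \<sigma> t \<le> 1 / sqrt (2 * pi * \<sigma>^2)"
  unfolding normal_density_def by (rule mult_left_le) (auto)

lemma Phi2_nonneg: "\<sigma> > 0 \<Longrightarrow> Phi2 \<sigma> p \<ge> 0"
  by (simp add: Phi2_def gauss_fun)

lemma Phi2_le: fixes \<sigma> :: real assumes "\<sigma> > 0" shows "Phi2 \<sigma> p \<le> 1 / (2 * pi * \<sigma>^2)"
proof -
  have "Phi2 \<sigma> p \<le> (1 / sqrt (2 * pi * \<sigma>^2)) * (1 / sqrt (2 * pi * \<sigma>^2))"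
    unfolding Phi2_def gauss_fun[OF assms] by (intro mult_mono nd_le assms) auto
  also have "\<dots> = 1 / (2 * pi * \<sigma>^2)" using assms by (simp add: real_sqrt_mult[symmetric])
  finally show ?thesis .
qed

lemma Phi2_cont: fixes \<sigma> :: real assumes "\<sigma> > 0" shows "continuous_on UNIV (Phi2 \<sigma>)"
  unfolding Phi2_def[abs_def] gauss_fun[OF assms] normal_density_def[abs_def] divide_inverse
  by (intro continuous_intros)

lemma Phi2_meas[measurable]: fixes \<sigma> :: real assumes "\<sigma> > 0" shows "Phi2 \<sigma> \<in> borel_measurable borel"
  by (rule borel_measurable_continuous_onI[OF Phi2_cont[OF assms]])

lemma prod_integrable_integral:
  fixes a :: "'a \<Rightarrow> real" and b :: "'b \<Rightarrow> real"
  assumes M1: "sigma_finite_measure M1" and M2: "sigma_finite_measure M2"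
    and a: "integrable M1 a" and b: "integrable M2 b"
  shows "integrable (M1 \<Otimes>\<^sub>M M2) (\<lambda>p. a (fst p) * b (snd p))"
    and "(\<integral>p. a (fst p) * b (snd p) \<partial>(M1 \<Otimes>\<^sub>M M2)) = (\<integral>u. a u \<partial>M1) * (\<integral>v. b v \<partial>M2)"
proof -
  interpret pair_sigma_finite M1 M2 using M1 M2 by (simp add: pair_sigma_finite_def)
  have ma[measurable]: "a \<in> borel_measurable M1" using a by (rule borel_measurable_integrable)
  have mb[measurable]: "b \<in> borel_measurable M2" using b by (rule borel_measurable_integrable)
  show int: "integrable (M1 \<Otimes>\<^sub>M M2) (\<lambda>p. a (fst p) * b (snd p))"
  proof (rule Fubini_integrable)
    show "(\<lambda>p. a (fst p) * b (snd p)) \<in> borel_measurable (M1 \<Otimes>\<^sub>M M2)" by measurable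
    have "(\<lambda>x. \<integral>y. norm (a (fst (x, y)) * b (snd (x, y))) \<partial>M2) = (\<lambda>x. \<bar>a x\<bar> * (\<integral>y. \<bar>b y\<bar> \<partial>M2))"
      by (simp add: abs_mult)
    then show "integrable M1 (\<lambda>x. \<integral>y. norm (a (fst (x, y)) * b (snd (x, y))) \<partial>M2)"
      using a by (simp add: integrable_mult_left)
    show "AE x in M1. integrable M2 (\<lambda>y. a (fst (x, y)) * b (snd (x, y)))"
      using b by simp
  qed
  have "(\<integral>x. (\<integral>y. a (fst (x, y)) * b (snd (x, y)) \<partial>M2) \<partial>M1) = integral\<^sup>L (M1 \<Otimes>\<^sub>M M2) (\<lambda>p. a (fst p) * b (snd p))"
    by (rule integral_fst'[OF int])
  moreover have "(\<lambda>x. \<integral>y. a (fst (x, y)) * b (snd (x, y)) \<partial>M2) = (\<lambda>x. a x * (\<integral>y. b y \<partial>M2))"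
    by (rule ext) (simp only: fst_conv snd_conv integral_mult_right_zero)
  moreover have "(\<integral>x. a x * (\<integral>y. b y \<partial>M2) \<partial>M1) = (\<integral>u. a u \<partial>M1) * (\<integral>v. b v \<partial>M2)"
    by (rule integral_mult_left_zero)
  ultimately show "(\<integral>p. a (fst p) * b (snd p) \<partial>(M1 \<Otimes>\<^sub>M M2)) = (\<integral>u. a u \<partial>M1) * (\<integral>v. b v \<partial>M2)"
    by simp
qed

lemma sf_N: "sigma_finite_measure (lborel \<Otimes>\<^sub>M lborel :: ((real \<times> real) \<times> (real \<times> real)) measure)"
  unfolding lborel_prod by (rule sigma_finite_lborel)

lemma conv_integrable:
  fixes \<sigma> :: real and f :: "real \<times> real \<Rightarrow> real"
  assumes \<sigma>: "\<sigma> > 0" and f: "integrable lborel f"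
  shows "integrable lborel (\<lambda>y. Phi2 \<sigma> (x - y) * f y)"
proof (rule Bochner_Integration.integrable_bound)
  show "integrable lborel (\<lambda>y. (1 / (2 * pi * \<sigma>^2)) * \<bar>f y\<bar>)" using f by auto
  have [measurable]: "f \<in> borel_measurable lborel" using f by (rule borel_measurable_integrable)
  note Phi2_meas[OF \<sigma>, measurable]
  show "(\<lambda>y. Phi2 \<sigma> (x - y) * f y) \<in> borel_measurable lborel" by measurable
  show "AE y in lborel. norm (Phi2 \<sigma> (x - y) * f y) \<le> norm ((1 / (2 * pi * \<sigma>^2)) * \<bar>f y\<bar>)"
  proof (rule AE_I2)
    fix y
    have a: "Phi2 \<sigma> (x - y) * \<bar>f y\<bar> \<le> (1 / (2 * pi * \<sigma>^2)) * \<bar>f y\<bar>"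
      by (rule mult_right_mono[OF Phi2_le[OF \<sigma>]]) simp
    have b: "Phi2 \<sigma> (x - y) \<ge> 0" by (rule Phi2_nonneg[OF \<sigma>])
    have c: "1 / (2 * pi * \<sigma>^2) > 0" using \<sigma> by simp
    have "norm (Phi2 \<sigma> (x - y) * f y) = Phi2 \<sigma> (x - y) * \<bar>f y\<bar>" using b by (simp add: abs_mult)
    moreover have "norm ((1 / (2 * pi * \<sigma>^2)) * \<bar>f y\<bar>) = (1 / (2 * pi * \<sigma>^2)) * \<bar>f y\<bar>"
      using c by (simp add: abs_mult)
    ultimately show "norm (Phi2 \<sigma> (x - y) * f y) \<le> norm ((1 / (2 * pi * \<sigma>^2)) * \<bar>f y\<bar>)"
      using a by simp
  qed
qed

lemma fubini_main:
  fixes \<sigma> C :: real and M :: "'x measure" and \<psi> :: "'x \<Rightarrow> real \<times> real" and f g :: "real \<times> real \<Rightarrow> real"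
  assumes \<sigma>: "\<sigma> > 0" and M: "sigma_finite_measure M" and \<psi>[measurable]: "\<psi> \<in> borel_measurable M"
    and f: "integrable lborel f" and g: "integrable lborel g"
    and Kint: "\<And>y z. integrable M (\<lambda>x. Phi2 \<sigma> (\<psi> x - y) * Phi2 \<sigma> (\<psi> x - z))"
    and Kbd: "\<And>y z. (\<integral>x. Phi2 \<sigma> (\<psi> x - y) * Phi2 \<sigma> (\<psi> x - z) \<partial>M) \<le> C"
  shows "integrable M (\<lambda>x. conv2 (Phi2 \<sigma>) f (\<psi> x) * conv2 (Phi2 \<sigma>) g (\<psi> x))"
    and "(\<integral>x. conv2 (Phi2 \<sigma>) f (\<psi> x) * conv2 (Phi2 \<sigma>) g (\<psi> x) \<partial>M)
       = (\<integral>w. f (fst w) * g (snd w) * (\<integral>x. Phi2 \<sigma> (\<psi> x - fst w) * Phi2 \<sigma> (\<psi> x - snd w) \<partial>M) \<partial>(lborel \<Otimes>\<^sub>M lborel))"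
    and "integrable (lborel \<Otimes>\<^sub>M lborel) (\<lambda>w. f (fst w) * g (snd w) * (\<integral>x. Phi2 \<sigma> (\<psi> x - fst w) * Phi2 \<sigma> (\<psi> x - snd w) \<partial>M))"
proof -
  define N where "N = (lborel \<Otimes>\<^sub>M lborel :: ((real \<times> real) \<times> (real \<times> real)) measure)"
  define K where "K y z = (\<integral>x. Phi2 \<sigma> (\<psi> x - y) * Phi2 \<sigma> (\<psi> x - z) \<partial>M)" for y z
  interpret P: pair_sigma_finite N M using M sf_N by (simp add: pair_sigma_finite_def N_def)
  have mf[measurable]: "f \<in> borel_measurable lborel" using f by (rule borel_measurable_integrable)
  have mg[measurable]: "g \<in> borel_measurable lborel" using g by (rule borel_measurable_integrable)
  note Phi2_meas[OF \<sigma>, measurable]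
  define G where "G w x = Phi2 \<sigma> (\<psi> x - fst w) * f (fst w) * (Phi2 \<sigma> (\<psi> x - snd w) * g (snd w))" for w x
  have mG[measurable]: "(\<lambda>(w, x). G w x) \<in> borel_measurable (N \<Otimes>\<^sub>M M)"
    unfolding G_def N_def by measurable
  have mK: "(\<lambda>w. K (fst w) (snd w)) \<in> borel_measurable N"
  proof -
    have [measurable]: "(\<lambda>(w, x). Phi2 \<sigma> (\<psi> x - fst w) * Phi2 \<sigma> (\<psi> x - snd w)) \<in> borel_measurable (N \<Otimes>\<^sub>M M)"
      unfolding N_def by measurable
    show ?thesis unfolding K_def by (rule P.M2.borel_measurable_lebesgue_integral) measurable
  qed
  have K0: "K y z \<ge> 0" for y z
    unfolding K_def by (intro integral_nonneg_AE AE_I2 mult_nonneg_nonneg Phi2_nonneg[OF \<sigma>])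
  have KC: "K y z \<le> C" for y z unfolding K_def by (rule Kbd)
  have C0: "C \<ge> 0" using K0 KC order_trans by blast
  have fgN: "integrable N (\<lambda>w. \<bar>f (fst w)\<bar> * \<bar>g (snd w)\<bar>)"
    unfolding N_def by (rule prod_integrable_integral(1)) (use f g in \<open>auto intro: sigma_finite_lborel\<close>)
  have inner_M: "(\<integral>x. G w x \<partial>M) = f (fst w) * g (snd w) * K (fst w) (snd w)" for w
  proof -
    have "(\<lambda>x. G w x) = (\<lambda>x. (f (fst w) * g (snd w)) * (Phi2 \<sigma> (\<psi> x - fst w) * Phi2 \<sigma> (\<psi> x - snd w)))"
      by (rule ext) (simp add: G_def algebra_simps)
    then show ?thesis by (simp add: K_def)
  qed
  have inner_N: "(\<integral>w. G w x \<partial>N) = conv2 (Phi2 \<sigma>) f (\<psi> x) * conv2 (Phi2 \<sigma>) g (\<psi> x)" for x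
    unfolding N_def G_def conv2_def
    by (rule prod_integrable_integral(2)) (auto intro: sigma_finite_lborel conv_integrable[OF \<sigma>] f g)
  have intG: "integrable (N \<Otimes>\<^sub>M M) (\<lambda>(w, x). G w x)"
  proof (rule P.Fubini_integrable)
    show "(\<lambda>(w, x). G w x) \<in> borel_measurable (N \<Otimes>\<^sub>M M)" by (rule mG)
    have eq: "(\<lambda>w. \<integral>x. norm ((\<lambda>(w, x). G w x) (w, x)) \<partial>M) = (\<lambda>w. \<bar>f (fst w)\<bar> * \<bar>g (snd w)\<bar> * K (fst w) (snd w))"
    proof (rule ext)
      fix w
      have "(\<lambda>x. norm ((\<lambda>(w, x). G w x) (w, x))) = (\<lambda>x. (\<bar>f (fst w)\<bar> * \<bar>g (snd w)\<bar>) * (Phi2 \<sigma> (\<psi> x - fst w) * Phi2 \<sigma> (\<psi> x - snd w)))"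
        by (rule ext) (simp add: G_def abs_mult Phi2_nonneg[OF \<sigma>] algebra_simps)
      then show "(\<integral>x. norm ((\<lambda>(w, x). G w x) (w, x)) \<partial>M) = \<bar>f (fst w)\<bar> * \<bar>g (snd w)\<bar> * K (fst w) (snd w)"
        by (simp add: K_def)
    qed
    show "integrable N (\<lambda>w. \<integral>x. norm ((\<lambda>(w, x). G w x) (w, x)) \<partial>M)"
      unfolding eq
    proof (rule Bochner_Integration.integrable_bound)
      show "integrable N (\<lambda>w. C * (\<bar>f (fst w)\<bar> * \<bar>g (snd w)\<bar>))" using fgN by simp
      show "(\<lambda>w. \<bar>f (fst w)\<bar> * \<bar>g (snd w)\<bar> * K (fst w) (snd w)) \<in> borel_measurable N"
        using mK unfolding N_def by measurable
      show "AE w in N. norm (\<bar>f (fst w)\<bar> * \<bar>g (snd w)\<bar> * K (fst w) (snd w)) \<le> norm (C * (\<bar>f (fst w)\<bar> * \<bar>g (snd w)\<bar>))"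
      proof (rule AE_I2)
        fix w
        have "\<bar>f (fst w)\<bar> * \<bar>g (snd w)\<bar> * K (fst w) (snd w) \<le> \<bar>f (fst w)\<bar> * \<bar>g (snd w)\<bar> * C"
          using KC by (intro mult_left_mono) auto
        then show "norm (\<bar>f (fst w)\<bar> * \<bar>g (snd w)\<bar> * K (fst w) (snd w)) \<le> norm (C * (\<bar>f (fst w)\<bar> * \<bar>g (snd w)\<bar>))"
          using K0[of "fst w" "snd w"] C0 by (simp add: abs_mult algebra_simps)
      qed
    qed
    show "AE w in N. integrable M (\<lambda>x. (\<lambda>(w, x). G w x) (w, x))"
    proof (rule AE_I2)
      fix w
      have "(\<lambda>x. (\<lambda>(w, x). G w x) (w, x)) = (\<lambda>x. (f (fst w) * g (snd w)) * (Phi2 \<sigma> (\<psi> x - fst w) * Phi2 \<sigma> (\<psi> x - snd w)))"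
        by (rule ext) (simp add: G_def algebra_simps)
      then show "integrable M (\<lambda>x. (\<lambda>(w, x). G w x) (w, x))" using Kint by simp
    qed
  qed
  have intG': "integrable (N \<Otimes>\<^sub>M M) (case_prod G)" using intG by simp
  show "integrable M (\<lambda>x. conv2 (Phi2 \<sigma>) f (\<psi> x) * conv2 (Phi2 \<sigma>) g (\<psi> x))"
    using P.integrable_snd[OF intG'] unfolding inner_N .
  show "integrable (lborel \<Otimes>\<^sub>M lborel) (\<lambda>w. f (fst w) * g (snd w) * (\<integral>x. Phi2 \<sigma> (\<psi> x - fst w) * Phi2 \<sigma> (\<psi> x - snd w) \<partial>M))"
    using P.integrable_fst[OF intG'] unfolding inner_M by (simp add: N_def K_def)
  have "(\<integral>x. (\<integral>w. G w x \<partial>N) \<partial>M) = (\<integral>w. (\<integral>x. G w x \<partial>M) \<partial>N)"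
    using P.integral_snd[OF intG'] P.integral_fst[OF intG'] by simp
  then show "(\<integral>x. conv2 (Phi2 \<sigma>) f (\<psi> x) * conv2 (Phi2 \<sigma>) g (\<psi> x) \<partial>M)
       = (\<integral>w. f (fst w) * g (snd w) * (\<integral>x. Phi2 \<sigma> (\<psi> x - fst w) * Phi2 \<sigma> (\<psi> x - snd w) \<partial>M) \<partial>(lborel \<Otimes>\<^sub>M lborel))"
    unfolding inner_N inner_M by (simp add: N_def K_def)
qed

definition ccf :: "real \<Rightarrow> real \<Rightarrow> real \<Rightarrow> real" where
  "ccf \<sigma> a b = 1 / (2 * pi * \<sigma>^2) * exp (- ((a - b)^2) / (4 * \<sigma>^2))"

lemma ccf_pos: "\<sigma> > 0 \<Longrightarrow> ccf \<sigma> a b > 0" by (simp add: ccf_def)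
lemma ccf_le: assumes "\<sigma> > 0" shows "ccf \<sigma> a b \<le> 1 / (2 * pi * \<sigma>^2)"
  unfolding ccf_def using assms by (intro mult_left_le) auto

lemma nd_prod: fixes \<sigma> :: real assumes \<sigma>: "\<sigma> > 0"
  shows "normal_density 0 \<sigma> (s - a) * normal_density 0 \<sigma> (s - b) = ccf \<sigma> a b * ww \<sigma> (s - (a + b) / 2)"
proof -
  have e: "- ((s - a - 0)^2) / (2 * \<sigma>^2) + - ((s - b - 0)^2) / (2 * \<sigma>^2) = - ((a - b)^2) / (4 * \<sigma>^2) + - ((s - (a + b) / 2)^2) / \<sigma>^2"
    using \<sigma> by (simp add: field_simps power2_eq_square)
  have s: "1 / sqrt (2 * pi * \<sigma>^2) * (1 / sqrt (2 * pi * \<sigma>^2)) = 1 / (2 * pi * \<sigma>^2)"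
    using \<sigma> by (simp add: real_sqrt_mult[symmetric])
  have "normal_density 0 \<sigma> (s - a) * normal_density 0 \<sigma> (s - b)
      = (1 / sqrt (2 * pi * \<sigma>^2) * (1 / sqrt (2 * pi * \<sigma>^2))) * exp (- ((s - a - 0)^2) / (2 * \<sigma>^2) + - ((s - b - 0)^2) / (2 * \<sigma>^2))"
    unfolding normal_density_def exp_add by (simp add: algebra_simps)
  also have "\<dots> = 1 / (2 * pi * \<sigma>^2) * exp (- ((a - b)^2) / (4 * \<sigma>^2) + - ((s - (a + b) / 2)^2) / \<sigma>^2)"
    unfolding s e ..
  also have "\<dots> = ccf \<sigma> a b * ww \<sigma> (s - (a + b) / 2)"
    unfolding exp_add ccf_def ww_def by simp
  finally show ?thesis .
qed

lemma ww_shift_normal: assumes "r > 0"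
  shows "ww r (x - m) = (r * sqrt pi) * normal_density m (r / sqrt 2) x"
proof -
  have "2 * pi * (r / sqrt 2)^2 = pi * r^2" by (simp add: power_divide)
  moreover have "sqrt (pi * r^2) = sqrt pi * r" using assms by (simp add: real_sqrt_mult)
  moreover have "2 * (r / sqrt 2)^2 = r^2" by (simp add: power_divide)
  ultimately show ?thesis using assms by (simp add: normal_density_def ww_def field_simps)
qed

lemma Q1: fixes \<sigma> :: real assumes \<sigma>: "\<sigma> > 0"
  shows "integrable lborel (\<lambda>s. normal_density 0 \<sigma> (s - a) * normal_density 0 \<sigma> (s - b))"
    and "(\<integral>s. normal_density 0 \<sigma> (s - a) * normal_density 0 \<sigma> (s - b) \<partial>lborel) = ccf \<sigma> a b * (\<sigma> * sqrt pi)"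
proof -
  have eq: "(\<lambda>s. normal_density 0 \<sigma> (s - a) * normal_density 0 \<sigma> (s - b))
     = (\<lambda>s. (ccf \<sigma> a b * (\<sigma> * sqrt pi)) * normal_density ((a + b) / 2) (\<sigma> / sqrt 2) s)"
    by (rule ext) (simp add: nd_prod[OF \<sigma>] ww_shift_normal[OF \<sigma>])
  show "integrable lborel (\<lambda>s. normal_density 0 \<sigma> (s - a) * normal_density 0 \<sigma> (s - b))"
    unfolding eq using \<sigma> by (intro integrable_mult_right) (rule integrable_normal_density, simp)
  show "(\<integral>s. normal_density 0 \<sigma> (s - a) * normal_density 0 \<sigma> (s - b) \<partial>lborel) = ccf \<sigma> a b * (\<sigma> * sqrt pi)"
    unfolding eq using \<sigma> by simp
qed

lemma ww_grid: assumes \<sigma>: "\<sigma> > 0" and \<delta>: "\<delta> > 0"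
  shows "ww \<sigma> (1 + of_int k * \<delta> - m) = ww (\<sigma> / \<delta>) (of_int k - (m - 1) / \<delta>)"
proof -
  have "(1 + of_int k * \<delta> - m)^2 / \<sigma>^2 = (of_int k - (m - 1) / \<delta>)^2 / (\<sigma> / \<delta>)^2"
    using \<sigma> \<delta> by (simp add: field_simps power2_eq_square)
  then show ?thesis by (simp add: ww_def)
qed

lemma nonneg_summable_abs:
  fixes F :: "'a \<Rightarrow> real"
  assumes "F summable_on UNIV" "\<And>x. F x \<ge> 0"
  shows "Infinite_Set_Sum.abs_summable_on F UNIV" and "infsetsum F UNIV = infsum F UNIV"
proof -
  have "Infinite_Sum.abs_summable_on F UNIV" using assms by simp
  then show a: "Infinite_Set_Sum.abs_summable_on F UNIV" by (rule abs_summable_equivalent[THEN iffD1])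
  show "infsetsum F UNIV = infsum F UNIV" by (rule infsetsum_infsum[OF a])
qed

lemma T1: fixes \<sigma> \<delta> :: real assumes \<sigma>: "\<sigma> > 0" and \<delta>: "\<delta> > 0"
  shows "Infinite_Set_Sum.abs_summable_on (\<lambda>k::int. normal_density 0 \<sigma> (1 + of_int k * \<delta> - a) * normal_density 0 \<sigma> (1 + of_int k * \<delta> - b)) UNIV"
    and "infsetsum (\<lambda>k::int. normal_density 0 \<sigma> (1 + of_int k * \<delta> - a) * normal_density 0 \<sigma> (1 + of_int k * \<delta> - b)) UNIV
        = ccf \<sigma> a b * infsum (\<lambda>k::int. ww (\<sigma> / \<delta>) (of_int k - ((a + b) / 2 - 1) / \<delta>)) UNIV"
proof -
  have r: "\<sigma> / \<delta> > 0" using \<sigma> \<delta> by simp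
  let ?S = "\<lambda>k::int. ww (\<sigma> / \<delta>) (of_int k - ((a + b) / 2 - 1) / \<delta>)"
  have eq: "(\<lambda>k::int. normal_density 0 \<sigma> (1 + of_int k * \<delta> - a) * normal_density 0 \<sigma> (1 + of_int k * \<delta> - b))
      = (\<lambda>k. ccf \<sigma> a b * ?S k)"
    by (rule ext) (simp add: nd_prod[OF \<sigma>] ww_grid[OF \<sigma> \<delta>, symmetric] algebra_simps)
  have sm: "?S summable_on UNIV" by (rule S_main(1)[OF r])
  have ab: "Infinite_Set_Sum.abs_summable_on ?S UNIV" and isum: "infsetsum ?S UNIV = infsum ?S UNIV"
    using nonneg_summable_abs[OF sm] by (auto simp: less_imp_le[OF ww_pos])
  show "Infinite_Set_Sum.abs_summable_on (\<lambda>k::int. normal_density 0 \<sigma> (1 + of_int k * \<delta> - a) * normal_density 0 \<sigma> (1 + of_int k * \<delta> - b)) UNIV"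
    unfolding eq by (rule abs_summable_on_cmult_right[OF ab])
  show "infsetsum (\<lambda>k::int. normal_density 0 \<sigma> (1 + of_int k * \<delta> - a) * normal_density 0 \<sigma> (1 + of_int k * \<delta> - b)) UNIV
        = ccf \<sigma> a b * infsum ?S UNIV"
    unfolding eq infsetsum_cmult_right[OF ab] isum ..
qed

lemma Q2: fixes \<sigma> :: real assumes \<sigma>: "\<sigma> > 0"
  shows "integrable lborel (\<lambda>x::real \<times> real. Phi2 \<sigma> (x - y) * Phi2 \<sigma> (x - z))"
    and "(\<integral>x. Phi2 \<sigma> (x - y) * Phi2 \<sigma> (x - z) \<partial>lborel)
        = (ccf \<sigma> (fst y) (fst z) * (\<sigma> * sqrt pi)) * (ccf \<sigma> (snd y) (snd z) * (\<sigma> * sqrt pi))"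
proof -
  define A where "A s = normal_density 0 \<sigma> (s - fst y) * normal_density 0 \<sigma> (s - fst z)" for s
  define B where "B t = normal_density 0 \<sigma> (t - snd y) * normal_density 0 \<sigma> (t - snd z)" for t
  have eq: "(\<lambda>x::real \<times> real. Phi2 \<sigma> (x - y) * Phi2 \<sigma> (x - z)) = (\<lambda>p. A (fst p) * B (snd p))"
    by (rule ext) (simp add: Phi2_def gauss_fun[OF \<sigma>] A_def B_def algebra_simps)
  have iA: "integrable lborel A" unfolding A_def by (rule Q1(1)[OF \<sigma>])
  have iB: "integrable lborel B" unfolding B_def by (rule Q1(1)[OF \<sigma>])
  have sf: "sigma_finite_measure (lborel :: real measure)" by (rule sigma_finite_lborel)
  show "integrable lborel (\<lambda>x::real \<times> real. Phi2 \<sigma> (x - y) * Phi2 \<sigma> (x - z))"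
    unfolding eq lborel_prod[symmetric] by (rule prod_integrable_integral(1)[OF sf sf iA iB])
  show "(\<integral>x. Phi2 \<sigma> (x - y) * Phi2 \<sigma> (x - z) \<partial>lborel)
        = (ccf \<sigma> (fst y) (fst z) * (\<sigma> * sqrt pi)) * (ccf \<sigma> (snd y) (snd z) * (\<sigma> * sqrt pi))"
    unfolding eq lborel_prod[symmetric] prod_integrable_integral(2)[OF sf sf iA iB]
    unfolding A_def B_def Q1(2)[OF \<sigma>] ..
qed

definition SS :: "real \<Rightarrow> nat \<Rightarrow> real \<Rightarrow> real \<Rightarrow> real" where
  "SS \<sigma> n a b = infsum (\<lambda>k::int. ww (\<sigma> / (2 / (real n - 1))) (of_int k - ((a + b) / 2 - 1) / (2 / (real n - 1)))) UNIV"

lemma Sig2: fixes \<sigma> :: real assumes \<sigma>: "\<sigma> > 0" and n: "n \<ge> 2"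
  shows "Infinite_Set_Sum.abs_summable_on (\<lambda>kl. Phi2 \<sigma> (gridpt n kl - y) * Phi2 \<sigma> (gridpt n kl - z)) UNIV"
    and "infsetsum (\<lambda>kl. Phi2 \<sigma> (gridpt n kl - y) * Phi2 \<sigma> (gridpt n kl - z)) UNIV
        = (ccf \<sigma> (fst y) (fst z) * SS \<sigma> n (fst y) (fst z)) * (ccf \<sigma> (snd y) (snd z) * SS \<sigma> n (snd y) (snd z))"
proof -
  define \<delta> where "\<delta> = 2 / (real n - 1)"
  have \<delta>: "\<delta> > 0" using n by (simp add: \<delta>_def)
  define F1 where "F1 k = normal_density 0 \<sigma> (1 + of_int k * \<delta> - fst y) * normal_density 0 \<sigma> (1 + of_int k * \<delta> - fst z)" for k :: int
  define F2 where "F2 k = normal_density 0 \<sigma> (1 + of_int k * \<delta> - snd y) * normal_density 0 \<sigma> (1 + of_int k * \<delta> - snd z)" for k :: int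
  have g: "2 * of_int k / (real n - 1) = of_int k * \<delta>" for k :: int by (simp add: \<delta>_def)
  have g2: "real_of_int k * 2 / (real n - 1) = \<delta> * real_of_int k" for k :: int by (simp add: \<delta>_def)
  have eq: "(\<lambda>kl. Phi2 \<sigma> (gridpt n kl - y) * Phi2 \<sigma> (gridpt n kl - z)) = (\<lambda>(k, l). F1 k * F2 l)"
    by (rule ext) (auto simp: Phi2_def gauss_fun[OF \<sigma>] gridpt_def F1_def F2_def g algebra_simps g2)
  have a1: "Infinite_Set_Sum.abs_summable_on F1 UNIV" unfolding F1_def by (rule T1(1)[OF \<sigma> \<delta>])
  have a2: "Infinite_Set_Sum.abs_summable_on F2 UNIV" unfolding F2_def by (rule T1(1)[OF \<sigma> \<delta>])
  have U: "(UNIV :: (int \<times> int) set) = UNIV \<times> UNIV" by simp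
  show "Infinite_Set_Sum.abs_summable_on (\<lambda>kl. Phi2 \<sigma> (gridpt n kl - y) * Phi2 \<sigma> (gridpt n kl - z)) UNIV"
    unfolding eq U by (rule abs_summable_on_product) (auto intro: a1 a2)
  have "infsetsum (\<lambda>(k, l). F1 k * F2 l) (UNIV \<times> UNIV) = infsetsum F1 UNIV * infsetsum F2 UNIV"
    by (rule infsetsum_product) (auto intro: a1 a2)
  moreover have "infsetsum F1 UNIV = ccf \<sigma> (fst y) (fst z) * SS \<sigma> n (fst y) (fst z)"
    using T1(2)[OF \<sigma> \<delta>, of "fst y" "fst z"] unfolding F1_def SS_def \<delta>_def by simp
  moreover have "infsetsum F2 UNIV = ccf \<sigma> (snd y) (snd z) * SS \<sigma> n (snd y) (snd z)"
    using T1(2)[OF \<sigma> \<delta>, of "snd y" "snd z"] unfolding F2_def SS_def \<delta>_def by simp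
  ultimately show "infsetsum (\<lambda>kl. Phi2 \<sigma> (gridpt n kl - y) * Phi2 \<sigma> (gridpt n kl - z)) UNIV
        = (ccf \<sigma> (fst y) (fst z) * SS \<sigma> n (fst y) (fst z)) * (ccf \<sigma> (snd y) (snd z) * SS \<sigma> n (snd y) (snd z))"
    unfolding eq U by simp
qed

lemma SS_props: fixes \<sigma> :: real assumes \<sigma>: "\<sigma> > 0" and n: "n \<ge> 2"
  defines "r \<equiv> \<sigma> * (real n - 1) / 2"
  shows "0 \<le> SS \<sigma> n a b" "SS \<sigma> n a b \<le> r * sqrt pi + MM r / 4" "SS \<sigma> n a b \<ge> r * sqrt pi - MM r / 4"
    "SS \<sigma> n a b \<le> 1 + 2 * exp (-1/(4*r^2)) / (1 - exp (-1/r^2))"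
proof -
  have rr: "\<sigma> / (2 / (real n - 1)) = r" using n by (simp add: r_def field_simps)
  have r: "r > 0" using \<sigma> n by (simp add: r_def)
  show "0 \<le> SS \<sigma> n a b" unfolding SS_def by (rule infsum_nonneg) (simp add: less_imp_le[OF ww_pos])
  show "SS \<sigma> n a b \<le> r * sqrt pi + MM r / 4" unfolding SS_def rr by (rule S_main(2)[OF r])
  show "SS \<sigma> n a b \<ge> r * sqrt pi - MM r / 4" unfolding SS_def rr by (rule S_main(3)[OF r])
  show "SS \<sigma> n a b \<le> 1 + 2 * exp (-1/(4*r^2)) / (1 - exp (-1/r^2))" unfolding SS_def rr by (rule S_small[OF r])
qed

lemma kernel_bound: fixes \<sigma> :: real assumes \<sigma>: "\<sigma> > 0" and n: "n \<ge> 2"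
  shows "\<bar>((real n - 1) / 2)^2 * ((ccf \<sigma> a1 b1 * (\<sigma> * sqrt pi)) * (ccf \<sigma> a2 b2 * (\<sigma> * sqrt pi)))
          - (ccf \<sigma> a1 b1 * SS \<sigma> n a1 b1) * (ccf \<sigma> a2 b2 * SS \<sigma> n a2 b2)\<bar>
         \<le> 1 / (2 * pi * \<sigma>^2)^2 * (1 + (real n - 1) * \<sigma> / sqrt 2)"
proof -
  define r where "r = \<sigma> * (real n - 1) / 2"
  have r: "r > 0" using \<sigma> n by (simp add: r_def)
  define c1 where "c1 = ccf \<sigma> a1 b1"
  define c2 where "c2 = ccf \<sigma> a2 b2"
  define S1 where "S1 = SS \<sigma> n a1 b1"
  define S2 where "S2 = SS \<sigma> n a2 b2"
  have c1: "0 < c1" "c1 \<le> 1 / (2 * pi * \<sigma>^2)" using ccf_pos[OF \<sigma>] ccf_le[OF \<sigma>] by (auto simp: c1_def)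
  have c2: "0 < c2" "c2 \<le> 1 / (2 * pi * \<sigma>^2)" using ccf_pos[OF \<sigma>] ccf_le[OF \<sigma>] by (auto simp: c2_def)
  have comb: "\<bar>S1 * S2 - (r * sqrt pi)^2\<bar> \<le> 1 + sqrt 2 * r"
    unfolding S1_def S2_def
    by (rule combine[OF r]) (use SS_props[OF \<sigma> n] in \<open>simp_all add: r_def\<close>)
  have e1: "((real n - 1) / 2)^2 * ((c1 * (\<sigma> * sqrt pi)) * (c2 * (\<sigma> * sqrt pi))) - (c1 * S1) * (c2 * S2)
      = (c1 * c2) * ((r * sqrt pi)^2 - S1 * S2)"
    by (simp add: r_def power2_eq_square algebra_simps)
  have "\<bar>(c1 * c2) * ((r * sqrt pi)^2 - S1 * S2)\<bar> = (c1 * c2) * \<bar>S1 * S2 - (r * sqrt pi)^2\<bar>"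
    using c1 c2 by (simp add: abs_mult abs_minus_commute)
  also have "\<dots> \<le> (c1 * c2) * (1 + sqrt 2 * r)"
    using c1 c2 comb by (intro mult_left_mono) auto
  also have "\<dots> \<le> (1 / (2 * pi * \<sigma>^2) * (1 / (2 * pi * \<sigma>^2))) * (1 + sqrt 2 * r)"
    using c1 c2 r by (intro mult_right_mono mult_mono) auto
  also have "sqrt 2 * r = (real n - 1) * \<sigma> / sqrt 2"
  proof -
    have "sqrt 2 * sqrt 2 = 2" by simp
    then show ?thesis unfolding r_def by (simp add: field_simps)
  qed
  finally show ?thesis unfolding c1_def[symmetric] c2_def[symmetric] S1_def[symmetric] S2_def[symmetric] e1
    by (simp add: power2_eq_square)
qed

theorem mainTheorem18:
  fixes \<sigma> :: real and n :: nat and f g :: "real \<times> real \<Rightarrow> real"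
  assumes "\<sigma> > 0" and "n \<ge> 2"
    and "integrable lborel f" and "L2 f"
    and "integrable lborel g" and "L2 g"
  shows "(\<lambda>kl. conv2 (Phi2 \<sigma>) f (gridpt n kl) * conv2 (Phi2 \<sigma>) g (gridpt n kl)) summable_on (UNIV :: (int \<times> int) set)
    \<and> \<bar>((real n - 1) / 2)^2 * L2inner (conv2 (Phi2 \<sigma>) f) (conv2 (Phi2 \<sigma>) g)
        - infsum (\<lambda>kl. conv2 (Phi2 \<sigma>) f (gridpt n kl) * conv2 (Phi2 \<sigma>) g (gridpt n kl)) (UNIV :: (int \<times> int) set)\<bar>
      \<le> L1norm f * L1norm g / (2 * pi * \<sigma>^2)^2 * (1 + (real n - 1) * \<sigma> / sqrt 2)"
proof -
  note \<sigma> = assms(1) and n = assms(2) and f = assms(3) and g = assms(5)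
  define h where "h = conv2 (Phi2 \<sigma>) f"
  define k where "k = conv2 (Phi2 \<sigma>) g"
  define N where "N = (lborel \<Otimes>\<^sub>M lborel :: ((real \<times> real) \<times> (real \<times> real)) measure)"
  define KL where "KL w = (\<integral>x. Phi2 \<sigma> (x - fst w) * Phi2 \<sigma> (x - snd w) \<partial>lborel)" for w :: "(real \<times> real) \<times> (real \<times> real)"
  define KC where "KC w = (\<integral>x. Phi2 \<sigma> (gridpt n x - fst w) * Phi2 \<sigma> (gridpt n x - snd w) \<partial>count_space UNIV)" for w :: "(real \<times> real) \<times> (real \<times> real)"
  define B where "B = 1 / (2 * pi * \<sigma>^2)^2 * (1 + (real n - 1) * \<sigma> / sqrt 2)"
  define c0 where "c0 = 1 / (2 * pi * \<sigma>^2)"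
  define r where "r = \<sigma> * (real n - 1) / 2"
  have r: "r > 0" using \<sigma> n by (simp add: r_def)
  have c00: "c0 \<ge> 0" using \<sigma> by (simp add: c0_def)
  have KLf: "KL w = (ccf \<sigma> (fst (fst w)) (fst (snd w)) * (\<sigma> * sqrt pi)) * (ccf \<sigma> (snd (fst w)) (snd (snd w)) * (\<sigma> * sqrt pi))" for w
    unfolding KL_def by (rule Q2(2)[OF \<sigma>])
  have KCf: "KC w = (ccf \<sigma> (fst (fst w)) (fst (snd w)) * SS \<sigma> n (fst (fst w)) (fst (snd w))) * (ccf \<sigma> (snd (fst w)) (snd (snd w)) * SS \<sigma> n (snd (fst w)) (snd (snd w)))" for w
    using Sig2(2)[OF \<sigma> n, of "fst w" "snd w"] unfolding KC_def infsetsum_def by simp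
  have ccb: "0 \<le> ccf \<sigma> a b" "ccf \<sigma> a b \<le> c0" for a b using ccf_pos[OF \<sigma>] ccf_le[OF \<sigma>] by (auto simp: c0_def less_imp_le)
  have KLb: "(\<integral>x. Phi2 \<sigma> (x - y) * Phi2 \<sigma> (x - z) \<partial>lborel) \<le> (c0 * (\<sigma> * sqrt pi)) * (c0 * (\<sigma> * sqrt pi))" for y z
    unfolding Q2(2)[OF \<sigma>] using ccb \<sigma> c00 by (intro mult_mono mult_right_mono) auto
  have SSb: "0 \<le> SS \<sigma> n a b" "SS \<sigma> n a b \<le> r * sqrt pi + MM r / 4" for a b
    using SS_props(1,2)[OF \<sigma> n] by (auto simp: r_def)
  have M0: "0 \<le> r * sqrt pi + MM r / 4" using SSb order_trans by blast
  have i1: "ccf \<sigma> a b * SS \<sigma> n a b \<le> c0 * (r * sqrt pi + MM r / 4)" for a b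
    by (rule mult_mono) (use ccb SSb c00 in auto)
  have i0: "0 \<le> ccf \<sigma> a b * SS \<sigma> n a b" for a b using ccb SSb by simp
  have KCb: "(\<integral>x. Phi2 \<sigma> (gridpt n x - y) * Phi2 \<sigma> (gridpt n x - z) \<partial>count_space UNIV)
      \<le> (c0 * (r * sqrt pi + MM r / 4)) * (c0 * (r * sqrt pi + MM r / 4))" for y z
  proof -
    have e: "(\<integral>x. Phi2 \<sigma> (gridpt n x - y) * Phi2 \<sigma> (gridpt n x - z) \<partial>count_space UNIV)
       = (ccf \<sigma> (fst y) (fst z) * SS \<sigma> n (fst y) (fst z)) * (ccf \<sigma> (snd y) (snd z) * SS \<sigma> n (snd y) (snd z))"
      using Sig2(2)[OF \<sigma> n, of y z] unfolding infsetsum_def .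
    show ?thesis unfolding e by (rule mult_mono[OF i1 i1 _ i0]) (use c00 M0 in simp)
  qed
  have psiL: "(\<lambda>x::real \<times> real. x) \<in> borel_measurable lborel" by simp
  note FL = fubini_main[OF \<sigma> sigma_finite_lborel psiL f g Q2(1)[OF \<sigma>] KLb]
  have sfC: "sigma_finite_measure (count_space (UNIV :: (int \<times> int) set))"
    by (rule sigma_finite_measure_count_space_countable) simp
  have psiC: "gridpt n \<in> borel_measurable (count_space UNIV)" by simp
  have KCi: "integrable (count_space UNIV) (\<lambda>x. Phi2 \<sigma> (gridpt n x - y) * Phi2 \<sigma> (gridpt n x - z))" for y z
    using Sig2(1)[OF \<sigma> n, of y z] unfolding abs_summable_on_def .
  note FC = fubini_main[OF \<sigma> sfC psiC f g KCi KCb]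
  have abs: "Infinite_Set_Sum.abs_summable_on (\<lambda>kl. h (gridpt n kl) * k (gridpt n kl)) UNIV"
    using FC(1) unfolding abs_summable_on_def h_def k_def .
  have sum: "(\<lambda>kl. h (gridpt n kl) * k (gridpt n kl)) summable_on (UNIV :: (int \<times> int) set)"
    by (rule abs_summable_summable[OF abs_summable_equivalent[THEN iffD2, OF abs]])
  have isum: "infsum (\<lambda>kl. h (gridpt n kl) * k (gridpt n kl)) (UNIV :: (int \<times> int) set)
      = (\<integral>w. f (fst w) * g (snd w) * KC w \<partial>N)"
    using infsetsum_infsum[OF abs, symmetric] FC(2) unfolding infsetsum_def h_def k_def KC_def N_def by simp
  have iL: "L2inner h k = (\<integral>w. f (fst w) * g (snd w) * KL w \<partial>N)"
    using FL(2) unfolding L2inner_def h_def k_def KL_def N_def by simp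
  have intL: "integrable N (\<lambda>w. f (fst w) * g (snd w) * KL w)"
    using FL(3) unfolding KL_def N_def by simp
  have intC: "integrable N (\<lambda>w. f (fst w) * g (snd w) * KC w)"
    using FC(3) unfolding KC_def N_def by simp
  define c where "c = ((real n - 1) / 2)^2"
  have diff: "c * L2inner h k - infsum (\<lambda>kl. h (gridpt n kl) * k (gridpt n kl)) UNIV
      = (\<integral>w. f (fst w) * g (snd w) * (c * KL w - KC w) \<partial>N)"
  proof -
    have "(\<integral>w. f (fst w) * g (snd w) * (c * KL w - KC w) \<partial>N)
        = (\<integral>w. c * (f (fst w) * g (snd w) * KL w) - f (fst w) * g (snd w) * KC w \<partial>N)"
      by (simp add: algebra_simps)
    also have "\<dots> = (\<integral>w. c * (f (fst w) * g (snd w) * KL w) \<partial>N) - (\<integral>w. f (fst w) * g (snd w) * KC w \<partial>N)"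
      by (rule Bochner_Integration.integral_diff) (use intL intC in auto)
    also have "\<dots> = c * L2inner h k - infsum (\<lambda>kl. h (gridpt n kl) * k (gridpt n kl)) UNIV"
      unfolding iL isum by simp
    finally show ?thesis by simp
  qed
  have kb: "\<bar>c * KL w - KC w\<bar> \<le> B" for w
    unfolding KLf KCf c_def B_def by (rule kernel_bound[OF \<sigma> n])
  have fgN: "integrable N (\<lambda>w. \<bar>f (fst w)\<bar> * \<bar>g (snd w)\<bar>)"
    and fgNi: "(\<integral>w. \<bar>f (fst w)\<bar> * \<bar>g (snd w)\<bar> \<partial>N) = (\<integral>u. \<bar>f u\<bar> \<partial>lborel) * (\<integral>v. \<bar>g v\<bar> \<partial>lborel)"
    unfolding N_def using prod_integrable_integral[OF sigma_finite_lborel sigma_finite_lborel, of "\<lambda>u. \<bar>f u\<bar>" "\<lambda>v. \<bar>g v\<bar>"] f g by auto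
  have intD: "integrable N (\<lambda>w. f (fst w) * g (snd w) * (c * KL w - KC w))"
  proof -
    have "(\<lambda>w. f (fst w) * g (snd w) * (c * KL w - KC w)) = (\<lambda>w. c * (f (fst w) * g (snd w) * KL w) - f (fst w) * g (snd w) * KC w)"
      by (rule ext) (simp add: algebra_simps)
    then show ?thesis using intL intC by simp
  qed
  have "\<bar>\<integral>w. f (fst w) * g (snd w) * (c * KL w - KC w) \<partial>N\<bar> \<le> (\<integral>w. \<bar>f (fst w) * g (snd w) * (c * KL w - KC w)\<bar> \<partial>N)"
    by (rule integral_abs_bound)
  also have "\<dots> \<le> (\<integral>w. B * (\<bar>f (fst w)\<bar> * \<bar>g (snd w)\<bar>) \<partial>N)"
  proof (rule integral_mono)
    show "integrable N (\<lambda>w. \<bar>f (fst w) * g (snd w) * (c * KL w - KC w)\<bar>)" using intD by simp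
    show "integrable N (\<lambda>w. B * (\<bar>f (fst w)\<bar> * \<bar>g (snd w)\<bar>))" using fgN by simp
    fix w
    have "\<bar>f (fst w) * g (snd w) * (c * KL w - KC w)\<bar> = (\<bar>f (fst w)\<bar> * \<bar>g (snd w)\<bar>) * \<bar>c * KL w - KC w\<bar>"
      by (simp add: abs_mult)
    also have "\<dots> \<le> (\<bar>f (fst w)\<bar> * \<bar>g (snd w)\<bar>) * B" by (intro mult_left_mono kb) simp
    finally show "\<bar>f (fst w) * g (snd w) * (c * KL w - KC w)\<bar> \<le> B * (\<bar>f (fst w)\<bar> * \<bar>g (snd w)\<bar>)"
      by (simp add: algebra_simps)
  qed
  also have "\<dots> = B * (L1norm f * L1norm g)"
    using fgNi by (simp add: L1norm_def)
  finally have est: "\<bar>c * L2inner h k - infsum (\<lambda>kl. h (gridpt n kl) * k (gridpt n kl)) UNIV\<bar> \<le> B * (L1norm f * L1norm g)"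
    unfolding diff .
  show ?thesis
    using sum est unfolding h_def k_def c_def B_def by (simp add: algebra_simps)
qed

end
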